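(* Let $I$ and $J$ be finite sets, let $g\in\mathbb{R}^J$, and for each $i\in I$ let $u_i:\mathbb{R}^J\to\mathbb{R}\cup\{-\infty\}$ be upper semicontinuous and concave with $u_i(x_i+rg)>u_i(x_i)$ for all $x_i\in\mathrm{dom}\,u_i$ and all $r>0$. Let $x^0\in\mathbb{R}^{I\times J}$ be an allocation. Then: (1) if $x^0$ is Pareto efficient, it is a double auction equilibrium. (2) If in addition each $u_i$ satisfies: whenever $u_i(x_i)>u_i(x_i')$ for some $x_i'\in\mathrm{dom}\,u_i$, then $x_i-\varepsilon g\in\mathrm{dom}\,u_i$ for all small enough $\varepsilon>0$, then every double auction equilibrium $x^0$ is Pareto efficient.
   Context: $\mathrm{dom}\,u_i=\{x\in\mathbb{R}^J\mid u_i(x)>-\infty\}$. Given the current allocation $x^0=(x^0_i)_{i\in I}$, define agent $i$'s indifference-price function $D_i(x_i):=\sup\{r\in\mathbb{R}\mid u_i(x^0_i+x_i-rg)\ge u_i(x^0_i)\}$, and let $CS(x^0)$ be the optimal value (supremum) of the problem: maximize $\sum_{i\in I}D_i(x_i)$ over $x\in\mathbb{R}^{I\times J}$ subject to $\sum_{i\in I}x_i=0$. The allocation $x^0$ is a double auction equilibrium if $CS(x^0)=0$. An allocation $x$ is feasible if $\sum_{i\in I}x_i=\sum_{i\in I}x^0_i$; a feasible allocation $x$ is Pareto efficient if there is no feasible allocation $x'$ with $u_i(x'_i)\ge u_i(x_i)$ for all $i\in I$ and strict inequality for at least one $i$. *)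

theory Defs
  imports "HOL-Analysis.Analysis"
begin

text \<open>Utilities take values in the reals extended by minus infinity; we use ereal
  together with the standing assumption that +infinity is never attained.\<close>

definition edom :: "('a \<Rightarrow> ereal) \<Rightarrow> 'a set" where
  "edom u = {x. u x > -\<infinity>}"

definition usc :: "('a::topological_space \<Rightarrow> ereal) \<Rightarrow> bool" where
  "usc u \<longleftrightarrow> (\<forall>x. Limsup (at x) u \<le> u x)"

definition concave_ext :: "('a::real_vector \<Rightarrow> ereal) \<Rightarrow> bool" where
  "concave_ext u \<longleftrightarrow>
     (\<forall>x y (t::real). 0 < t \<and> t < 1 \<longrightarrow>
        ereal t * u x + ereal (1 - t) * u y \<le> u (t *\<^sub>R x + (1 - t) *\<^sub>R y))"

definition indiff_price :: "('a::real_vector \<Rightarrow> ereal) \<Rightarrow> 'a \<Rightarrow> 'a \<Rightarrow> 'a \<Rightarrow> ereal" where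
  "indiff_price u g x0i xi = (SUP r \<in> {r::real. u (x0i + xi - r *\<^sub>R g) \<ge> u x0i}. ereal r)"

definition CS :: "('i::finite \<Rightarrow> 'a::real_vector \<Rightarrow> ereal) \<Rightarrow> 'a \<Rightarrow> ('i \<Rightarrow> 'a) \<Rightarrow> ereal" where
  "CS u g x0 = (SUP x \<in> {x::'i \<Rightarrow> 'a. (\<Sum>i\<in>UNIV. x i) = 0}.
                   \<Sum>i\<in>UNIV. indiff_price (u i) g (x0 i) (x i))"

definition double_auction_eq :: "('i::finite \<Rightarrow> 'a::real_vector \<Rightarrow> ereal) \<Rightarrow> 'a \<Rightarrow> ('i \<Rightarrow> 'a) \<Rightarrow> bool" where
  "double_auction_eq u g x0 \<longleftrightarrow> CS u g x0 = 0"

definition feasible :: "('i::finite \<Rightarrow> 'a::real_vector) \<Rightarrow> ('i \<Rightarrow> 'a) \<Rightarrow> bool" where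
  "feasible x0 x \<longleftrightarrow> (\<Sum>i\<in>UNIV. x i) = (\<Sum>i\<in>UNIV. x0 i)"

definition pareto_efficient :: "('i::finite \<Rightarrow> 'a::real_vector \<Rightarrow> ereal) \<Rightarrow> ('i \<Rightarrow> 'a) \<Rightarrow> ('i \<Rightarrow> 'a) \<Rightarrow> bool" where
  "pareto_efficient u x0 x \<longleftrightarrow> feasible x0 x \<and>
     \<not> (\<exists>x'. feasible x0 x' \<and> (\<forall>i. u i (x' i) \<ge> u i (x i)) \<and> (\<exists>i. u i (x' i) > u i (x i)))"

end

theory Submission
  imports Defs
begin

lemma conc_real:
  assumes "concave_ext u" "u x = ereal a" "u y = ereal b" "0 < t" "t < 1"
  shows "ereal (t*a + (1-t)*b) \<le> u (t *\<^sub>R x + (1-t) *\<^sub>R y)"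
  using assms unfolding concave_ext_def by (metis plus_ereal.simps(1) times_ereal.simps(1))

lemma dom_ge:
  assumes "x0 \<in> edom u" "u x0 \<le> u z" shows "z \<in> edom u"
  using assms unfolding edom_def by auto

lemma S_down:
  fixes u :: "'a::real_vector \<Rightarrow> ereal"
  assumes mono: "\<And>x r. x \<in> edom u \<Longrightarrow> r > 0 \<Longrightarrow> u (x + r *\<^sub>R g) > u x"
    and x0: "x0 \<in> edom u" and r: "u (y - r *\<^sub>R g) \<ge> u x0" and le: "r' \<le> r"
  shows "u (y - r' *\<^sub>R g) \<ge> u x0"
proof (cases "r' = r")
  case True then show ?thesis using r by simp
next
  case False
  then have "r - r' > 0" using le by simp
  have d: "y - r *\<^sub>R g \<in> edom u" using dom_ge[OF x0 r] .
  have "y - r' *\<^sub>R g = (y - r *\<^sub>R g) + (r - r') *\<^sub>R g" by (simp add: algebra_simps)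
  then have "u (y - r' *\<^sub>R g) > u (y - r *\<^sub>R g)" using mono[OF d \<open>r - r' > 0\<close>] by metis
  then show ?thesis using r by simp
qed

lemma D_fin:
  fixes u :: "'a::real_vector \<Rightarrow> ereal"
  assumes mono: "\<And>x r. x \<in> edom u \<Longrightarrow> r > 0 \<Longrightarrow> u (x + r *\<^sub>R g) > u x"
    and conc: "concave_ext u" and nop: "\<And>x. u x \<noteq> \<infinity>"
    and x0: "x0 \<in> edom u"
  shows "indiff_price u g x0 x \<noteq> \<infinity>"
proof
  assume inf: "indiff_price u g x0 x = \<infinity>"
  define y where "y = x0 + x"
  have big: "\<exists>r. r > R \<and> u (y - r *\<^sub>R g) \<ge> u x0" for R
  proof -
    have "ereal R < indiff_price u g x0 x" using inf by simp
    then show ?thesis unfolding indiff_price_def less_SUP_iff y_def by auto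
  qed
  have Sd: "u (y - r *\<^sub>R g) \<ge> u x0" if "r \<le> R" "u (y - R *\<^sub>R g) \<ge> u x0" for r R
    using S_down[OF mono x0 that(2) that(1)] by simp
  obtain c where c: "u x0 = ereal c" using x0 nop unfolding edom_def
    by (cases "u x0") auto
  obtain r1 where r1: "r1 > 1" "u (y - r1 *\<^sub>R g) \<ge> u x0" using big by blast
  have h0ge: "u y \<ge> u x0" using Sd[of 0 r1] r1 by simp
  have h1ge: "u (y - g) \<ge> u x0" using Sd[of 1 r1] r1 by simp
  obtain h0 where h0: "u y = ereal h0" using h0ge c nop[of y] by (cases "u y") auto
  obtain h1 where h1: "u (y - g) = ereal h1" using h1ge c nop[of "y - g"] by (cases "u (y-g)") auto
  have "u (y - g + 1 *\<^sub>R g) > u (y - g)"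
    using mono[OF dom_ge[OF x0 h1ge] zero_less_one] by simp
  then have h10: "h1 < h0" using h0 h1 by simp
  have cle: "c \<le> h0" "c \<le> h1" using h0ge h1ge h0 h1 c by auto
  define R0 where "R0 = max 2 ((h0 - c)/(h0 - h1) + 1)"
  obtain R where R: "R > R0" "u (y - R *\<^sub>R g) \<ge> u x0" using big by blast
  have R1: "R > 1" "R > (h0 - c)/(h0 - h1)" using R(1) unfolding R0_def by auto
  obtain hR where hR: "u (y - R *\<^sub>R g) = ereal hR" using R(2) c nop[of "y - R *\<^sub>R g"]
    by (cases "u (y - R *\<^sub>R g)") auto
  have hRc: "c \<le> hR" using R(2) c hR by simp
  define t where "t = 1 - 1/R"
  have t: "0 < t" "t < 1" using R1 unfolding t_def by (auto simp: field_simps)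
  have pt: "t *\<^sub>R y + (1-t) *\<^sub>R (y - R *\<^sub>R g) = y - g"
    using R1 unfolding t_def by (simp add: algebra_simps)
  have "ereal (t*h0 + (1-t)*hR) \<le> u (y - g)"
    using conc_real[OF conc h0 hR t] pt by simp
  then have A: "t*h0 + (1-t)*hR \<le> h1" using h1 by simp
  have "1 - t = 1/R" unfolding t_def by simp
  moreover have "t*h0 + (1-t)*hR = h0 - (1-t)*(h0-hR)" by (simp add: algebra_simps)
  ultimately have "h0 - (h0 - hR)/R \<le> h1" using A by simp
  then have "h0 - (h0 - c)/R \<le> h1" using hRc R1
    by (smt (verit, best) divide_right_mono)
  then have "h0 - h1 \<le> (h0 - c)/R" by simp
  then have "(h0 - h1) * R \<le> h0 - c" using R1 by (simp add: field_simps)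
  moreover have "(h0 - c)/(h0 - h1) * (h0 - h1) < R * (h0 - h1)"
    using R1 h10 by (intro mult_strict_right_mono) auto
  moreover have "(h0 - c)/(h0-h1)*(h0-h1) = h0 - c" using h10 by simp
  ultimately show False by (simp add: mult.commute)
qed

lemma D_zero_ge:
  fixes u :: "'a::real_vector \<Rightarrow> ereal"
  assumes "u (x0 + x) \<ge> u x0"
  shows "indiff_price u g x0 x \<ge> 0"
  unfolding indiff_price_def
  by (rule SUP_upper2[where i=0]) (use assms in auto)

lemma aux: fixes X Y :: real assumes "Y > 0" "X \<ge> 0" shows "Y/(2*(X+Y)) * X \<le> Y/2"
proof -
  have "Y/(2*(X+Y)) * X = Y/2 * (X/(X+Y))" by simp
  also have "X/(X+Y) \<le> 1" using assms by simp
  then have "Y/2 * (X/(X+Y)) \<le> Y/2 * 1" using assms by (intro mult_left_mono) auto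
  finally show ?thesis by simp
qed

theorem theorem5p2:
  fixes u :: "'i::finite \<Rightarrow> real^'j::finite \<Rightarrow> ereal"
    and g :: "real^'j"
    and x0 :: "'i \<Rightarrow> real^'j"
  assumes no_pinf: "\<And>i x. u i x \<noteq> \<infinity>"
    and usc: "\<And>i. usc (u i)"
    and conc: "\<And>i. concave_ext (u i)"
    and mono: "\<And>i x r. x \<in> edom (u i) \<Longrightarrow> r > 0 \<Longrightarrow> u i (x + r *\<^sub>R g) > u i x"
    and x0_dom: "\<And>i. x0 i \<in> edom (u i)"
  shows "(pareto_efficient u x0 x0 \<longrightarrow> double_auction_eq u g x0) \<and>
         ((\<forall>i x x'. x' \<in> edom (u i) \<and> u i x > u i x' \<longrightarrow>
              (\<exists>e0>0. \<forall>e. 0 < e \<and> e \<le> e0 \<longrightarrow> x - e *\<^sub>R g \<in> edom (u i)))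
          \<longrightarrow> (double_auction_eq u g x0 \<longrightarrow> pareto_efficient u x0 x0))"
proof (intro conjI impI)
  have CSge: "CS u g x0 \<ge> 0"
  proof -
    have "0 \<le> (\<Sum>i\<in>UNIV. indiff_price (u i) g (x0 i) ((\<lambda>_. 0) i))"
      by (rule sum_nonneg) (rule D_zero_ge, simp)
    also have "\<dots> \<le> CS u g x0" unfolding CS_def by (rule SUP_upper) simp
    finally show ?thesis .
  qed
  {
    assume PE: "pareto_efficient u x0 x0"
    have "CS u g x0 \<le> 0"
      unfolding CS_def
    proof (rule SUP_least)
      fix x :: "'i \<Rightarrow> real^'j" assume "x \<in> {x. sum x UNIV = 0}"
      then have sx: "sum x UNIV = 0" by simp
      define D where "D i = indiff_price (u i) g (x0 i) (x i)" for i
      show "(\<Sum>i\<in>UNIV. indiff_price (u i) g (x0 i) (x i)) \<le> 0"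
      proof (rule ccontr)
        assume "\<not> ?thesis"
        then have pos: "sum D UNIV > 0" unfolding D_def by simp
        have Dnp: "D i \<noteq> \<infinity>" for i unfolding D_def
          by (rule D_fin[OF mono conc no_pinf x0_dom])
        have Dnm: "D i \<noteq> -\<infinity>" for i
        proof
          assume m: "D i = -\<infinity>"
          have "sum D UNIV = D i + sum D (UNIV - {i})"
            by (simp add: sum.remove)
          moreover have "sum D (UNIV - {i}) \<noteq> \<infinity>" using Dnp by (simp add: sum_Pinfty)
          ultimately have "sum D UNIV = -\<infinity>" using m by simp
          then show False using pos by simp
        qed
        define d where "d i = real_of_ereal (D i)" for i
        have Dd: "D i = ereal (d i)" for i using Dnp Dnm unfolding d_def
          by (cases "D i") auto
        have "sum D UNIV = ereal (sum d UNIV)" using Dd by (simp add: sum_ereal)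
        then have spos: "sum d UNIV > 0" using pos by simp
        define n where "n = real (card (UNIV::'i set))"
        have n: "n > 0" unfolding n_def by simp
        define eps where "eps = sum d UNIV / (2*n)"
        have "\<exists>r. r > d i - eps \<and> u i (x0 i + x i - r *\<^sub>R g) \<ge> u i (x0 i)" for i
        proof -
          have "ereal (d i - eps) < D i" using Dd spos n unfolding eps_def by simp
          then show ?thesis unfolding D_def indiff_price_def less_SUP_iff by auto
        qed
        then obtain r where r: "\<And>i. r i > d i - eps"
          "\<And>i. u i (x0 i + x i - r i *\<^sub>R g) \<ge> u i (x0 i)" by metis
        have "sum (\<lambda>i. d i - eps) UNIV < sum r UNIV"
          by (rule sum_strict_mono) (auto intro: r)
        moreover have "sum (\<lambda>i. d i - eps) UNIV = sum d UNIV - n * eps"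
          unfolding n_def by (simp add: sum_subtractf)
        moreover have "n * eps = sum d UNIV / 2" using n unfolding eps_def by simp
        ultimately have rpos: "sum r UNIV > 0" using spos by simp
        define s where "s = sum r UNIV / n"
        have s: "s > 0" using rpos n unfolding s_def by simp
        define x' where "x' i = x0 i + x i - r i *\<^sub>R g + s *\<^sub>R g" for i
        have "sum x' UNIV = sum x0 UNIV + sum x UNIV - (sum r UNIV) *\<^sub>R g + (n * s) *\<^sub>R g"
          unfolding x'_def n_def by (simp add: sum.distrib sum_subtractf scaleR_sum_left sum_constant_scaleR del: sum_constant)
        also have "n * s = sum r UNIV" using n unfolding s_def by simp
        finally have feas: "feasible x0 x'" unfolding feasible_def using sx by simp
        have better: "u i (x' i) > u i (x0 i)" for i
        proof -
          have dz: "x0 i + x i - r i *\<^sub>R g \<in> edom (u i)" using dom_ge[OF x0_dom r(2)] .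
          show ?thesis using mono[OF dz s] r(2)[of i] unfolding x'_def by simp
        qed
        have "\<not> pareto_efficient u x0 x0"
          unfolding pareto_efficient_def using feas better by (auto intro: less_imp_le)
        then show False using PE by simp
      qed
    qed
    then show "double_auction_eq u g x0" unfolding double_auction_eq_def using CSge by simp
  }
  {
    assume cond: "\<forall>i x x'. x' \<in> edom (u i) \<and> u i x > u i x' \<longrightarrow>
              (\<exists>e0>0. \<forall>e. 0 < e \<and> e \<le> e0 \<longrightarrow> x - e *\<^sub>R g \<in> edom (u i))"
      and DA: "double_auction_eq u g x0"
    show "pareto_efficient u x0 x0"
      unfolding pareto_efficient_def
    proof (intro conjI notI)
      show "feasible x0 x0" unfolding feasible_def by simp
      assume "\<exists>x'. feasible x0 x' \<and> (\<forall>i. u i (x0 i) \<le> u i (x' i)) \<and> (\<exists>i. u i (x0 i) < u i (x' i))"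
      then obtain x' k where feas: "feasible x0 x'" and ge: "\<And>i. u i (x0 i) \<le> u i (x' i)"
        and gt: "u k (x0 k) < u k (x' k)" by blast
      define y where "y i = x' i - x0 i" for i
      have sy: "sum y UNIV = 0" using feas unfolding y_def feasible_def by (simp add: sum_subtractf)
      define D where "D i = indiff_price (u i) g (x0 i) (y i)" for i
      have D0: "D i \<ge> 0" for i unfolding D_def by (rule D_zero_ge) (simp add: y_def ge)
      obtain e0 where e0: "e0 > 0" "x' k - e0 *\<^sub>R g \<in> edom (u k)"
        using cond x0_dom[of k] gt by blast
      obtain c where c: "u k (x0 k) = ereal c" using x0_dom[of k] no_pinf unfolding edom_def
        by (cases "u k (x0 k)") auto
      obtain a where a: "u k (x' k) = ereal a" using gt c no_pinf[of k "x' k"]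
        by (cases "u k (x' k)") auto
      obtain b where b: "u k (x' k - e0 *\<^sub>R g) = ereal b" using e0(2) no_pinf unfolding edom_def
        by (cases "u k (x' k - e0 *\<^sub>R g)") auto
      have ac: "a > c" using gt a c by simp
      define s where "s = (a - c) / (2 * (\<bar>a - b\<bar> + (a - c)))"
      have den: "2 * (\<bar>a - b\<bar> + (a - c)) > 0" using ac by (smt (verit) abs_ge_zero)
      have s: "0 < s" "s < 1" using ac den unfolding s_def
        by (auto intro: divide_pos_pos simp only: divide_less_eq) (smt (verit) divide_less_eq)
      have "s * \<bar>a - b\<bar> \<le> (a - c)/2"
        unfolding s_def by (rule aux) (use ac in auto)
      moreover have "s * (a - b) \<le> s * \<bar>a - b\<bar>" using s by (intro mult_left_mono) auto
      ultimately have key: "(1 - s)*a + s*b \<ge> c" using ac by (simp add: algebra_simps)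
      have pt: "(1 - s) *\<^sub>R x' k + (1 - (1 - s)) *\<^sub>R (x' k - e0 *\<^sub>R g) = x' k - (s*e0) *\<^sub>R g"
        by (simp add: algebra_simps)
      have "ereal ((1-s)*a + (1-(1-s))*b) \<le> u k (x' k - (s*e0) *\<^sub>R g)"
        using conc_real[OF conc a b, of "1 - s"] s pt by simp
      moreover have "ereal c \<le> ereal ((1-s)*a + (1-(1-s))*b)" using key by simp
      ultimately have "ereal c \<le> u k (x' k - (s*e0) *\<^sub>R g)" by (rule order_trans[rotated])
      then have inS: "u k (x0 k + y k - (s*e0) *\<^sub>R g) \<ge> u k (x0 k)"
        using c unfolding y_def by simp
      have "ereal (s*e0) \<le> D k" unfolding D_def indiff_price_def
        by (rule SUP_upper) (use inS in simp)
      then have Dk: "D k > 0" using s e0 by (metis ereal_less(2) mult_pos_pos order_less_le_trans)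
      have "sum D UNIV = D k + sum D (UNIV - {k})" by (simp add: sum.remove)
      moreover have "sum D (UNIV - {k}) \<ge> 0" by (rule sum_nonneg) (use D0 in auto)
      ultimately have "sum D UNIV > 0" using Dk
        by (metis add.right_neutral add_left_mono order_less_le_trans)
      moreover have "sum D UNIV \<le> CS u g x0" unfolding CS_def D_def
        by (rule SUP_upper) (simp add: sy)
      ultimately show False using DA unfolding double_auction_eq_def by simp
    qed
  }
qed

end
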